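(* Let $T_{\mu\nu}$ be a given stress-energy tensor on a four-dimensional spacetime, $\kappa=8\pi G/c^4$, $\Lambda\in\mathbb{R}$, and $f$ a differentiable real function. If a metric $g_{\mu\nu}$ is simultaneously a solution of Einstein's field equations $R_{\mu\nu}-\tfrac12 Rg_{\mu\nu}+\Lambda g_{\mu\nu}=\kappa T_{\mu\nu}$ and of the $f(R)$ field equations $f'(R)R_{\mu\nu}-\tfrac12 f(R)g_{\mu\nu}-\nabla_\mu\nabla_\nu f'(R)+\square f'(R)g_{\mu\nu}=\kappa T_{\mu\nu}$, and its Ricci scalar $R=g^{\mu\nu}R_{\mu\nu}$ equals a constant $k$, then $$k f'(k)-2f(k)+k-4\Lambda=0.$$
   Context: $R_{\mu\nu}$ is the Ricci tensor of $g_{\mu\nu}$, $\nabla$ its Levi-Civita connection and $\square=g^{\mu\nu}\nabla_\mu\nabla_\nu$. *)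

theory Defs
  imports "HOL-Analysis.Analysis"
begin

text \<open>Local-coordinate description of a 4-dimensional spacetime: a coordinate chart is an
open set U of real^4, the metric is a matrix-valued function, indices range over the type 4.\<close>

type_synonym pt = "real^4"
type_synonym idx = 4

definition pd :: "(pt \<Rightarrow> real) \<Rightarrow> idx \<Rightarrow> pt \<Rightarrow> real" where
  "pd F i x = frechet_derivative F (at x) (axis i 1)"

fun iter_pd :: "(pt \<Rightarrow> real) \<Rightarrow> idx list \<Rightarrow> pt \<Rightarrow> real" where
  "iter_pd F [] = F"
| "iter_pd F (i # is) = pd (iter_pd F is) i"

definition smooth_on :: "pt set \<Rightarrow> (pt \<Rightarrow> real) \<Rightarrow> bool" where
  "smooth_on U F \<longleftrightarrow> (\<forall>is. iter_pd F is differentiable_on U)"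

definition ginv :: "(pt \<Rightarrow> real^4^4) \<Rightarrow> pt \<Rightarrow> real^4^4" where
  "ginv g x = matrix_inv (g x)"

definition christoffel :: "(pt \<Rightarrow> real^4^4) \<Rightarrow> idx \<Rightarrow> idx \<Rightarrow> idx \<Rightarrow> pt \<Rightarrow> real" where
  "christoffel g a b c x = (1/2) * (\<Sum>d\<in>UNIV. ginv g x $ a $ d *
     (pd (\<lambda>y. g y $ d $ c) b x + pd (\<lambda>y. g y $ d $ b) c x - pd (\<lambda>y. g y $ b $ c) d x))"

definition ricci :: "(pt \<Rightarrow> real^4^4) \<Rightarrow> idx \<Rightarrow> idx \<Rightarrow> pt \<Rightarrow> real" where
  "ricci g b c x = (\<Sum>a\<in>UNIV. pd (christoffel g a b c) a x - pd (christoffel g a b a) c x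
     + (\<Sum>d\<in>UNIV. christoffel g a a d x * christoffel g d b c x
                 - christoffel g a c d x * christoffel g d b a x))"

definition ricci_scalar :: "(pt \<Rightarrow> real^4^4) \<Rightarrow> pt \<Rightarrow> real" where
  "ricci_scalar g x = (\<Sum>a\<in>UNIV. \<Sum>b\<in>UNIV. ginv g x $ a $ b * ricci g a b x)"

definition hess :: "(pt \<Rightarrow> real^4^4) \<Rightarrow> (pt \<Rightarrow> real) \<Rightarrow> idx \<Rightarrow> idx \<Rightarrow> pt \<Rightarrow> real" where
  "hess g \<phi> a b x = pd (pd \<phi> b) a x - (\<Sum>c\<in>UNIV. christoffel g c a b x * pd \<phi> c x)"

definition box :: "(pt \<Rightarrow> real^4^4) \<Rightarrow> (pt \<Rightarrow> real) \<Rightarrow> pt \<Rightarrow> real" where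
  "box g \<phi> x = (\<Sum>a\<in>UNIV. \<Sum>b\<in>UNIV. ginv g x $ a $ b * hess g \<phi> a b x)"

end

theory Submission
  imports Defs
begin
lemma pd_locconst:
  assumes "open U" "x \<in> U" "\<forall>y\<in>U. F y = C"
  shows "pd F i x = 0"
proof -
  have "((\<lambda>_. C) has_derivative (\<lambda>_. 0)) (at x)" by (rule has_derivative_const)
  hence "(F has_derivative (\<lambda>_. 0)) (at x)"
    by (rule has_derivative_transform_within_open[OF _ assms(1,2)]) (simp add: assms(3))
  hence "frechet_derivative F (at x) = (\<lambda>_. 0)" by (rule frechet_derivative_at[symmetric])
  thus ?thesis by (simp add: pd_def)
qed
lemma trace_inv:
  fixes A :: "real^4^4"
  assumes "transpose A = A" "invertible A"
  shows "(\<Sum>a\<in>UNIV. \<Sum>b\<in>UNIV. matrix_inv A $ a $ b * A $ a $ b) = 4"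
proof -
  have M: "matrix_inv A ** A = mat 1"
    using someI_ex[OF assms(2)[unfolded invertible_def]] unfolding matrix_inv_def by blast
  have S: "A $ a $ b = A $ b $ a" for a b
  proof -
    have "A $ a $ b = transpose A $ a $ b" using assms(1) by simp
    thus ?thesis by (simp add: transpose_def)
  qed
  have D: "(\<Sum>b\<in>UNIV. matrix_inv A $ a $ b * A $ a $ b) = (matrix_inv A ** A) $ a $ a" for a
    by (simp add: matrix_matrix_mult_def S)
  have "(\<Sum>a\<in>UNIV. \<Sum>b\<in>UNIV. matrix_inv A $ a $ b * A $ a $ b) = (\<Sum>a\<in>(UNIV::4 set). 1)"
    by (simp only: D M) (simp add: mat_def)
  thus ?thesis by simp
qed
theorem mainTheorem2:
  fixes g T :: "real^4 \<Rightarrow> real^4^4" and U :: "(real^4) set"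
    and f :: "real \<Rightarrow> real" and \<Lambda> k G c :: real
  assumes U_open: "open U" and U_ne: "U \<noteq> {}"
    and g_sym: "\<forall>x\<in>U. transpose (g x) = g x"
    and g_inv: "\<forall>x\<in>U. invertible (g x)"
    and g_lorentz: "\<forall>x\<in>U. det (g x) < 0"
    and g_smooth: "\<forall>i j. smooth_on U (\<lambda>x. g x $ i $ j)"
    and T_sym: "\<forall>x\<in>U. transpose (T x) = T x"
    and G_pos: "G > 0" and c_pos: "c > 0"
    and f_diff: "\<forall>r. f differentiable (at r)"
    and einstein: "\<forall>x\<in>U. \<forall>\<mu> \<nu>.
       ricci g \<mu> \<nu> x - 1/2 * ricci_scalar g x * g x $ \<mu> $ \<nu> + \<Lambda> * g x $ \<mu> $ \<nu>
         = (8 * pi * G / c ^ 4) * T x $ \<mu> $ \<nu>"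
    and fR: "\<forall>x\<in>U. \<forall>\<mu> \<nu>.
       deriv f (ricci_scalar g x) * ricci g \<mu> \<nu> x
       - 1/2 * f (ricci_scalar g x) * g x $ \<mu> $ \<nu>
       - hess g (\<lambda>y. deriv f (ricci_scalar g y)) \<mu> \<nu> x
       + box g (\<lambda>y. deriv f (ricci_scalar g y)) x * g x $ \<mu> $ \<nu>
         = (8 * pi * G / c ^ 4) * T x $ \<mu> $ \<nu>"
    and R_const: "\<forall>x\<in>U. ricci_scalar g x = k"
  shows "k * deriv f k - 2 * f k + k - 4 * \<Lambda> = 0"
proof -
  obtain x where x: "x \<in> U" using U_ne by blast
  define \<phi> where "\<phi> = (\<lambda>y. deriv f (ricci_scalar g y))"
  have p1: "\<forall>y\<in>U. pd \<phi> b y = 0" for b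
    using pd_locconst[OF U_open _, of _ \<phi> "deriv f k"] R_const by (simp add: \<phi>_def)
  have h0: "hess g \<phi> a b x = 0" for a b
    unfolding hess_def using pd_locconst[OF U_open x p1] p1 x by simp
  have b0: "box g \<phi> x = 0" by (simp add: box_def h0)
  define A where "A = ginv g x"
  have eq: "deriv f k * ricci g m n x - 1/2 * f k * g x $ m $ n
      = ricci g m n x - 1/2 * k * g x $ m $ n + \<Lambda> * g x $ m $ n" for m n
    proof -
    have "deriv f k * ricci g m n x - 1/2 * f k * g x $ m $ n = (8 * pi * G / c ^ 4) * T x $ m $ n"
      using fR[rule_format, OF x, of m n] R_const x h0[of m n] b0 unfolding \<phi>_def by simp
    moreover have "ricci g m n x - 1/2 * k * g x $ m $ n + \<Lambda> * g x $ m $ n = (8 * pi * G / c ^ 4) * T x $ m $ n"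
      using einstein[rule_format, OF x, of m n] R_const x by simp
    ultimately show ?thesis by simp
  qed
  have eq2: "A $ m $ n * (deriv f k * ricci g m n x) - 1/2 * f k * (A $ m $ n * g x $ m $ n)
      = A $ m $ n * ricci g m n x + (\<Lambda> - 1/2 * k) * (A $ m $ n * g x $ m $ n)" for m n
    using arg_cong[OF eq[of m n], of "\<lambda>t. A $ m $ n * t"] by (simp add: algebra_simps)
  have sR: "(\<Sum>m\<in>UNIV. \<Sum>n\<in>UNIV. A $ m $ n * ricci g m n x) = k"
    using R_const x by (simp add: A_def ricci_scalar_def)
  have sG: "(\<Sum>m\<in>UNIV. \<Sum>n\<in>UNIV. A $ m $ n * g x $ m $ n) = 4"
    using trace_inv g_sym g_inv x by (simp add: A_def ginv_def)
  have E: "(\<Sum>m\<in>UNIV. \<Sum>n\<in>UNIV. A $ m $ n * (deriv f k * ricci g m n x) - 1/2 * f k * (A $ m $ n * g x $ m $ n))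
      = (\<Sum>m\<in>UNIV. \<Sum>n\<in>UNIV. A $ m $ n * ricci g m n x + (\<Lambda> - 1/2 * k) * (A $ m $ n * g x $ m $ n))"
    using eq2 by simp
  have "deriv f k * k - 1/2 * f k * 4 = k + (\<Lambda> - 1/2 * k) * 4"
  proof -
    have l: "(\<Sum>m\<in>UNIV. \<Sum>n\<in>UNIV. A $ m $ n * (deriv f k * ricci g m n x) - 1/2 * f k * (A $ m $ n * g x $ m $ n))
      = deriv f k * (\<Sum>m\<in>UNIV. \<Sum>n\<in>UNIV. A $ m $ n * ricci g m n x) - 1/2 * f k * (\<Sum>m\<in>UNIV. \<Sum>n\<in>UNIV. A $ m $ n * g x $ m $ n)"
      by (simp only: sum_subtractf sum_distrib_left mult.left_commute)
    have r: "(\<Sum>m\<in>UNIV. \<Sum>n\<in>UNIV. A $ m $ n * ricci g m n x + (\<Lambda> - 1/2 * k) * (A $ m $ n * g x $ m $ n))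
      = (\<Sum>m\<in>UNIV. \<Sum>n\<in>UNIV. A $ m $ n * ricci g m n x) + (\<Lambda> - 1/2 * k) * (\<Sum>m\<in>UNIV. \<Sum>n\<in>UNIV. A $ m $ n * g x $ m $ n)"
      by (simp only: sum.distrib sum_distrib_left)
    show ?thesis using l r sR sG E by simp
  qed
  thus ?thesis by (simp add: algebra_simps)
qed

end
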